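(* For every distribution over $\mathscr X\times\mathscr Y$ and every $h\in\mathscr H_{\rm all}$, $$\mathscr R_{\mathsf L_{\rm ham}}(h)-\mathscr R^*_{\mathsf L_{\rm ham}}(\mathscr H_{\rm all})\le 2\big(\mathscr R_{\widetilde{\mathsf L}_{\log}}(h)-\mathscr R^*_{\widetilde{\mathsf L}_{\log}}(\mathscr H_{\rm all})\big)^{1/2}.$$ Moreover, $\widetilde{\mathsf L}_{\log}$ is Bayes-consistent with respect to $\mathsf L_{\rm ham}$.
   Context: Let $\mathscr X$ be an input space, $l\ge1$, $[l]=\{1,\dots,l\}$, $\mathscr Y=\{+1,-1\}^l$, and $\mathscr H_{\rm all}$ the family of all measurable $h\colon\mathscr X\times[l]\to\mathbb R$. Let $\operatorname{sign}(t)=1$ if $t\ge0$, $-1$ otherwise, and $\mathsf h(x)=(\operatorname{sign}h(x,1),\dots,\operatorname{sign}h(x,l))$. Normalized Hamming loss: $\overline{\mathsf L}_{\rm ham}(y',y)=\frac1l\sum_{i=1}^l1_{y_i\ne y'_i}$, $\mathsf L_{\rm ham}(h,x,y)=\overline{\mathsf L}_{\rm ham}(\mathsf h(x),y)$. Multi-label logistic loss: $\widetilde{\mathsf L}_{\log}(h,x,y)=\sum_{y'\in\mathscr Y}(1-\overline{\mathsf L}_{\rm ham}(y',y))\log\big(\sum_{y''\in\mathscr Y}e^{\sum_{i=1}^l(y''_i-y'_i)h(x,i)}\big)$. For a loss $\ell$ and distribution $\mathcal D$: $\mathscr R_\ell(h)=\mathbb E_{\mathcal D}[\ell(h,x,y)]$,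 $\mathscr R^*_\ell(\mathscr H)=\inf_{h\in\mathscr H}\mathscr R_\ell(h)$. A surrogate $\widetilde{\mathsf L}$ is Bayes-consistent w.r.t. $\mathsf L$ if for every distribution and every sequence $(h_n)\subset\mathscr H_{\rm all}$, $\mathscr R_{\widetilde{\mathsf L}}(h_n)-\mathscr R^*_{\widetilde{\mathsf L}}(\mathscr H_{\rm all})\to0$ implies $\mathscr R_{\mathsf L}(h_n)-\mathscr R^*_{\mathsf L}(\mathscr H_{\rm all})\to0$. *)

theory Defs
  imports "HOL-Probability.Probability"
begin

definition Ylab :: "nat \<Rightarrow> (nat \<Rightarrow> real) set" where
  "Ylab l = PiE {1..l} (\<lambda>_. {1, -1})"

definition sgn1 :: "real \<Rightarrow> real" where
  "sgn1 t = (if t \<ge> 0 then 1 else -1)"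

text \<open>Hypothesis set: all measurable \<open>h : X \<times> [l] \<rightarrow> \<real>\<close>
  (measurability w.r.t. the product with the discrete index set means each section is measurable).\<close>
definition Hall :: "'x measure \<Rightarrow> nat \<Rightarrow> ('x \<Rightarrow> nat \<Rightarrow> real) set" where
  "Hall M l = {h. \<forall>i\<in>{1..l}. (\<lambda>x. h x i) \<in> borel_measurable M}"

definition pred_lab :: "nat \<Rightarrow> ('x \<Rightarrow> nat \<Rightarrow> real) \<Rightarrow> 'x \<Rightarrow> (nat \<Rightarrow> real)" where
  "pred_lab l h x = (\<lambda>i\<in>{1..l}. sgn1 (h x i))"

definition ham_bar :: "nat \<Rightarrow> (nat \<Rightarrow> real) \<Rightarrow> (nat \<Rightarrow> real) \<Rightarrow> real" where
  "ham_bar l y' y = (1 / real l) * real (card {i\<in>{1..l}. y i \<noteq> y' i})"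

definition L_ham :: "nat \<Rightarrow> ('x \<Rightarrow> nat \<Rightarrow> real) \<Rightarrow> 'x \<Rightarrow> (nat \<Rightarrow> real) \<Rightarrow> real" where
  "L_ham l h x y = ham_bar l (pred_lab l h x) y"

definition L_log :: "nat \<Rightarrow> ('x \<Rightarrow> nat \<Rightarrow> real) \<Rightarrow> 'x \<Rightarrow> (nat \<Rightarrow> real) \<Rightarrow> real" where
  "L_log l h x y = (\<Sum>y'\<in>Ylab l. (1 - ham_bar l y' y) *
       ln (\<Sum>y''\<in>Ylab l. exp (\<Sum>i=1..l. (y'' i - y' i) * h x i)))"

text \<open>Risk (expected loss; both losses are nonnegative, so we use the nonnegative integral,
  which may be \<open>\<infinity>\<close>) and best-in-class risk.\<close>
definition risk :: "('x \<times> (nat \<Rightarrow> real)) measure \<Rightarrow> (('x \<Rightarrow> nat \<Rightarrow> real) \<Rightarrow> 'x \<Rightarrow> (nat \<Rightarrow> real) \<Rightarrow> real)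
                     \<Rightarrow> ('x \<Rightarrow> nat \<Rightarrow> real) \<Rightarrow> ennreal" where
  "risk D L h = (\<integral>\<^sup>+ z. ennreal (L h (fst z) (snd z)) \<partial>D)"

definition best_risk :: "('x \<times> (nat \<Rightarrow> real)) measure \<Rightarrow> (('x \<Rightarrow> nat \<Rightarrow> real) \<Rightarrow> 'x \<Rightarrow> (nat \<Rightarrow> real) \<Rightarrow> real)
                     \<Rightarrow> ('x \<Rightarrow> nat \<Rightarrow> real) set \<Rightarrow> ennreal" where
  "best_risk D L H = (INF h\<in>H. risk D L h)"

definition distr_on :: "'x measure \<Rightarrow> nat \<Rightarrow> ('x \<times> (nat \<Rightarrow> real)) measure \<Rightarrow> bool" where
  "distr_on M l D \<longleftrightarrow> prob_space D \<and> sets D = sets (M \<Otimes>\<^sub>M count_space (Ylab l))"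

definition bayes_consistent ::
  "'x measure \<Rightarrow> nat \<Rightarrow> (('x \<Rightarrow> nat \<Rightarrow> real) \<Rightarrow> 'x \<Rightarrow> (nat \<Rightarrow> real) \<Rightarrow> real)
     \<Rightarrow> (('x \<Rightarrow> nat \<Rightarrow> real) \<Rightarrow> 'x \<Rightarrow> (nat \<Rightarrow> real) \<Rightarrow> real) \<Rightarrow> bool" where
  "bayes_consistent M l Ls L \<longleftrightarrow>
     (\<forall>D hs. distr_on M l D \<longrightarrow> (\<forall>n. hs n \<in> Hall M l) \<longrightarrow>
        ((\<lambda>n. risk D Ls (hs n) - best_risk D Ls (Hall M l)) \<longlonglongrightarrow> 0) \<longrightarrow>
        ((\<lambda>n. risk D L (hs n) - best_risk D L (Hall M l)) \<longlonglongrightarrow> 0))"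

definition ennsqrt :: "ennreal \<Rightarrow> ennreal" where
  "ennsqrt x = (if x = \<infinity> then \<infinity> else ennreal (sqrt (enn2real x)))"

end

theory Submission
  imports Defs
begin


definition psi :: "real \<Rightarrow> real" where "psi t = ln (exp t + exp (- t))"
definition fl :: "real \<Rightarrow> real \<Rightarrow> real" where "fl c t = psi t - c * t"
definition tau :: "real \<Rightarrow> real \<Rightarrow> real" where "tau e c = (ln (1 + c + e) - ln (1 - c + e)) / 2"

lemma psi_ge_abs: "\<bar>t\<bar> \<le> psi t"
proof -
  have "exp \<bar>t\<bar> \<le> exp t + exp (- t)" by (cases "t \<ge> 0") auto
  hence "ln (exp \<bar>t\<bar>) \<le> psi t" unfolding psi_def
    by (subst ln_le_cancel_iff) (auto simp: add_pos_pos)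
  thus ?thesis by simp
qed

lemma psi_ge_ln2: "ln 2 \<le> psi t"
proof -
  have "0 \<le> (exp (t/2) - exp (-t/2))^2" by simp
  also have "\<dots> = exp t + exp (-t) - 2"
    by (simp add: power2_eq_square algebra_simps flip: exp_add)
  finally have "2 \<le> exp t + exp (- t)" by simp
  thus ?thesis unfolding psi_def by (subst ln_le_cancel_iff) auto
qed

lemma psi_le: assumes "\<bar>t\<bar> \<le> 1" shows "psi t \<le> ln 2 + t^2"
proof -
  have "exp \<bar>t\<bar> \<le> 1 + \<bar>t\<bar> + \<bar>t\<bar>^2" using assms by (intro exp_bound) auto
  moreover have "exp (-\<bar>t\<bar>) \<le> 1 - \<bar>t\<bar> + \<bar>t\<bar>^2"
  proof -
    have "1 \<le> (1 + \<bar>t\<bar>) * (1 - \<bar>t\<bar> + \<bar>t\<bar>^2)"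
      by (simp add: algebra_simps power2_eq_square) (simp add: mult.assoc[symmetric])
    also have "\<dots> \<le> exp \<bar>t\<bar> * (1 - \<bar>t\<bar> + \<bar>t\<bar>^2)"
    proof (rule mult_right_mono)
      show "1 + \<bar>t\<bar> \<le> exp \<bar>t\<bar>" by (rule exp_ge_add_one_self)
      show "0 \<le> 1 - \<bar>t\<bar> + \<bar>t\<bar>^2" using assms by simp
    qed
    finally show ?thesis by (simp add: exp_minus field_simps)
  qed
  ultimately have "exp t + exp (-t) \<le> 2 * (1 + t^2)"
    by (cases "t \<ge> 0") auto
  hence "psi t \<le> ln (2 * (1 + t^2))" unfolding psi_def
    by (subst ln_le_cancel_iff) (auto simp: add_pos_pos add_pos_nonneg)
  also have "\<dots> = ln 2 + ln (1 + t^2)" proof -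
    have "1 + t^2 > 0" by (simp add: add_pos_nonneg)
    thus ?thesis using ln_mult[of 2 "1 + t^2"] by simp
  qed
  also have "ln (1 + t^2) \<le> t^2" by (rule ln_add_one_self_le_self) simp
  finally show ?thesis by simp
qed

lemma ln_ge_one_minus_inv: "0 < (x::real) \<Longrightarrow> 1 - 1/x \<le> ln x"
  using ln_le_minus_one[of "1/x"] by (simp add: ln_div)

lemma fl_tau:
  assumes c: "\<bar>c\<bar> \<le> 1" and e: "e > 0"
  shows "fl c (tau e c) \<le> fl c t + e"
proof -
  define p where "p = (1 + c) / 2"
  define u where "u = 1 + c + e"
  define v where "v = 1 - c + e"
  have p01: "0 \<le> p" "p \<le> 1" using c by (auto simp: p_def)
  have u: "u > 0" and v: "v > 0" using c e by (auto simp: u_def v_def)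
  define E where "E = exp (2 * t)"
  have E: "E > 0" by (simp add: E_def)
  have psi_alt: "psi s = - s + ln (exp (2 * s) + 1)" for s
  proof -
    have "exp s + exp (- s) = exp (- s) * (exp (2 * s) + 1)"
      by (simp add: algebra_simps flip: exp_add)
    moreover have "exp (2 * s) + 1 > 0" by (simp add: add_pos_pos)
    ultimately show ?thesis unfolding psi_def by (simp add: ln_mult)
  qed
  have "2 * tau e c = ln u - ln v" by (simp add: tau_def u_def v_def)
  hence "exp (2 * tau e c) = u / v"
    using u v by (simp add: exp_diff)
  hence ft: "fl c (tau e c) = ln (u + v) - p * ln u - (1 - p) * ln v"
  proof -
    have a: "fl c (tau e c) = - tau e c + ln (u/v + 1) - c * tau e c"
      using \<open>exp (2 * tau e c) = u / v\<close> by (simp add: fl_def psi_alt)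
    have "u/v + 1 = (u+v)/v" using v by (simp add: field_simps)
    hence b: "ln (u/v + 1) = ln (u+v) - ln v" using u v by (simp add: ln_div)
    have t: "tau e c = (ln u - ln v) / 2" by (simp add: tau_def u_def v_def)
    show ?thesis by (subst a, unfold b t p_def) (simp add: field_simps)
  qed
  have f1: "fl c t = p * ln ((E + 1) / E) + (1 - p) * ln (E + 1)"
  proof -
    have eq2: "psi t = - t + ln (E + 1)" by (simp add: psi_alt E_def)
    have "E + 1 > 0" using E by simp
    have eq1: "ln ((E + 1) / E) = ln (E + 1) - 2 * t" using E \<open>E + 1 > 0\<close> by (simp add: ln_div E_def)
    show ?thesis by (simp only: fl_def p_def eq1 eq2) (simp add: algebra_simps)
  qed
  have pos1: "u * (E + 1) / (E * (u + v)) > 0" using u v E by (intro divide_pos_pos mult_pos_pos) auto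
  have pos2: "v * (E + 1) / (u + v) > 0" using u v E by (intro divide_pos_pos mult_pos_pos) auto
  have "1 - E * (u + v) / (u * (E + 1)) \<le> ln (u * (E + 1) / (E * (u + v)))"
    using ln_ge_one_minus_inv[OF pos1] by simp
  hence "p * ln (u * (E + 1) / (E * (u + v))) \<ge> p * (1 - E * (u + v) / (u * (E + 1)))"
    using p01 by (intro mult_left_mono) auto
  moreover have "1 - (u + v) / (v * (E + 1)) \<le> ln (v * (E + 1) / (u + v))"
    using ln_ge_one_minus_inv[OF pos2] by simp
  hence "(1 - p) * ln (v * (E + 1) / (u + v)) \<ge> (1 - p) * (1 - (u + v) / (v * (E + 1)))"
    using p01 by (intro mult_left_mono) auto
  moreover have "p * (1 - E * (u + v) / (u * (E + 1))) + (1 - p) * (1 - (u + v) / (v * (E + 1))) \<ge> - e"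
  proof -
    have "p / u \<le> 1/2" "(1 - p) / v \<le> 1/2" using u v e by (auto simp: p_def u_def v_def field_simps)
    hence "(u + v) / (E + 1) * (p * E / u + (1 - p) / v) \<le> (u + v) / (E + 1) * (E / 2 + 1 / 2)"
      using u v E p01 by (intro mult_left_mono add_mono) (auto simp: field_simps)
    also have "\<dots> = 1 + e" using E by (simp add: u_def v_def field_simps)
    finally have "(u + v) / (E + 1) * (p * E / u + (1 - p) / v) \<le> 1 + e" .
    moreover have "p * (1 - E * (u + v) / (u * (E + 1))) + (1 - p) * (1 - (u + v) / (v * (E + 1)))
      = 1 - (u + v) / (E + 1) * (p * E / u + (1 - p) / v)"
    proof -
      have gen: "F \<noteq> 0 \<Longrightarrow> p * (1 - E * (u + v) / (u * F)) + (1 - p) * (1 - (u + v) / (v * F))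
      = 1 - (u + v) / F * (p * E / u + (1 - p) / v)" for F
        using u v by (simp add: field_simps)
      show ?thesis by (rule gen) (use E in simp)
    qed
    ultimately show ?thesis by linarith
  qed
  moreover have "p * ln (u * (E + 1) / (E * (u + v))) + (1 - p) * ln (v * (E + 1) / (u + v))
      = fl c t - fl c (tau e c)"
  proof -
    have E1: "E + 1 > 0" using E by simp
    have l1: "ln (u * (E + 1) / (E * (u + v))) = ln u + ln (E + 1) - ln E - ln (u + v)"
      using u v E E1 by (simp add: ln_div ln_mult)
    have l2: "ln (v * (E + 1) / (u + v)) = ln v + ln (E + 1) - ln (u + v)"
      using u v E E1 by (simp add: ln_div ln_mult)
    have l3: "ln ((E + 1) / E) = ln (E + 1) - ln E"
      using E E1 by (simp add: ln_div)
    show ?thesis unfolding f1 ft l1 l2 l3 by (simp add: algebra_simps)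
  qed
  ultimately show ?thesis by linarith
qed

lemma key_point:
  fixes q g e :: real and l :: nat
  assumes l: "l \<ge> 1" and q: "0 \<le> q" "q \<le> 1" and e: "e > 0"
  defines "c \<equiv> (2 * q - 1) / l"
  defines "r \<equiv> ((if g < 0 then q else 1 - q) - min q (1 - q)) / l"
  shows "0 \<le> r" "r^2 \<le> 4 * (fl c g - fl c (tau e c) + e)" "0 \<le> fl c g - fl c (tau e c) + e"
proof -
  have lpos: "real l \<ge> 1" using l by simp
  have c1: "\<bar>c\<bar> \<le> 1" using q lpos unfolding c_def
    by (auto simp: abs_le_iff divide_le_eq le_divide_eq)
  have F: "fl c (tau e c) \<le> fl c t + e" for t using fl_tau[OF c1 e] .
  show "0 \<le> fl c g - fl c (tau e c) + e" using F[of g] by simp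
  show "0 \<le> r" unfolding r_def using lpos by (auto intro!: divide_nonneg_pos)
  have Fc: "fl c (tau e c) \<le> ln 2 - c^2/4 + e"
  proof -
    have "\<bar>c/2\<bar> \<le> 1" using c1 by simp
    from psi_le[OF this] have "fl c (c/2) \<le> ln 2 + (c/2)^2 - c * (c/2)" by (simp add: fl_def)
    also have "\<dots> = ln 2 - c^2/4" by (simp add: power2_eq_square field_simps)
    finally show ?thesis using F[of "c/2"] by simp
  qed
  have wrong: "c * g \<le> 0 \<Longrightarrow> c^2/4 \<le> fl c g - fl c (tau e c) + e"
    using Fc psi_ge_ln2[of g] by (simp add: fl_def)
  show "r^2 \<le> 4 * (fl c g - fl c (tau e c) + e)"
  proof (cases "g < 0")
    case True
    show ?thesis
    proof (cases "q \<ge> 1/2")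
      case True
      hence "r = c" using \<open>g < 0\<close> by (simp add: r_def c_def min_def)
      moreover have "c \<ge> 0" using True lpos by (simp add: c_def)
      ultimately show ?thesis using wrong \<open>g < 0\<close> by (simp add: mult_nonneg_nonpos)
    next
      case False
      hence "r = 0" using \<open>g < 0\<close> by (simp add: r_def min_def)
      thus ?thesis using F[of g] by simp
    qed
  next
    case False
    show ?thesis
    proof (cases "q \<le> 1/2")
      case True
      hence "r = - c" using \<open>\<not> g < 0\<close> by (simp add: r_def c_def min_def minus_divide_left)
      moreover have "c \<le> 0" using True lpos by (simp add: c_def divide_nonpos_pos)
      ultimately show ?thesis using wrong \<open>\<not> g < 0\<close> by (simp add: mult_nonpos_nonneg)
    next
      case False
      hence "r = 0" using \<open>\<not> g < 0\<close> by (simp add: r_def min_def)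
      thus ?thesis using F[of g] by simp
    qed
  qed
qed



lemma sumY_prod:
  "(\<Sum>y\<in>Ylab l. \<Prod>k\<in>{1..l}. f k (y k)) = (\<Prod>k\<in>{1..l}. (f k 1 + f k (-1) :: real))"
proof -
  have "(\<Prod>k\<in>{1..l}. \<Sum>s\<in>{1,-1}. f k s) = (\<Sum>y\<in>Ylab l. \<Prod>k\<in>{1..l}. f k (y k))"
    unfolding Ylab_def by (rule prod_sum_PiE) auto
  thus ?thesis by simp
qed

lemma prod_if_eq:
  assumes "j \<in> {1..l}"
  shows "(\<Prod>k\<in>{1..l}. if k = j then a else b) = (a * b ^ (l - 1) :: real)"
proof -
  have "(\<Prod>k\<in>{1..l}. if k = j then a else b) = (if j = j then a else b) * (\<Prod>k\<in>{1..l} - {j}. if k = j then a else b)"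
    using assms by (intro prod.remove) auto
  also have "(\<Prod>k\<in>{1..l} - {j}. if k = j then a else b) = (\<Prod>k\<in>{1..l} - {j}. b)"
    by (intro prod.cong) auto
  also have "\<dots> = b ^ (l - 1)" using assms by simp
  finally show ?thesis by simp
qed

lemma Ylab_mem: "y \<in> Ylab l \<Longrightarrow> i \<in> {1..l} \<Longrightarrow> y i = 1 \<or> y i = -1"
  unfolding Ylab_def by (auto simp: PiE_iff)

lemma count_N:
  assumes j: "j \<in> {1..l}" and yj: "b = 1 \<or> b = -1"
  shows "(\<Sum>y'\<in>Ylab l. if y' j = b then 1 else 0) = (2::real) ^ (l - 1)"
proof -
  have "(\<Sum>y'\<in>Ylab l. if y' j = b then 1 else 0) =
      (\<Sum>y'\<in>Ylab l. \<Prod>k\<in>{1..l}. (\<lambda>k s. if k = j then (if s = b then 1 else 0) else (1::real)) k (y' k))"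
    using j by (intro sum.cong refl) (simp add: prod.delta)
  also have "\<dots> = (\<Prod>k\<in>{1..l}. if k = j then 1 else 2)"
    unfolding sumY_prod[where f = "\<lambda>k s. if k = j then (if s = b then 1 else 0) else (1::real)"]
    using yj by (intro prod.cong refl) auto
  also have "\<dots> = 2 ^ (l - 1)" using prod_if_eq[OF j] by simp
  finally show ?thesis .
qed

lemma count_M:
  assumes j: "j \<in> {1..l}" and i: "i \<in> {1..l}" and yj: "b = 1 \<or> b = -1"
  shows "(\<Sum>y'\<in>Ylab l. (if y' j = b then 1 else 0) * y' i) = (if i = j then 2 ^ (l - 1) * b else 0)"
proof (cases "i = j")
  case True
  have "(\<Sum>y'\<in>Ylab l. (if y' j = b then 1 else 0) * y' i) =
      (\<Sum>y'\<in>Ylab l. \<Prod>k\<in>{1..l}. (\<lambda>k s. if k = j then (if s = b then s else 0) else (1::real)) k (y' k))"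
    using j True by (intro sum.cong refl) (simp add: prod.delta)
  also have "\<dots> = (\<Prod>k\<in>{1..l}. if k = j then b else 2)"
    unfolding sumY_prod[where f = "\<lambda>k s. if k = j then (if s = b then s else 0) else (1::real)"]
    using yj by (intro prod.cong refl) auto
  also have "\<dots> = b * 2 ^ (l - 1)" using prod_if_eq[OF j] by simp
  finally show ?thesis using True by simp
next
  case False
  have "(\<Sum>y'\<in>Ylab l. (if y' j = b then 1 else 0) * y' i) =
      (\<Sum>y'\<in>Ylab l. \<Prod>k\<in>{1..l}. (\<lambda>k s. if k = j then (if s = b then 1 else 0) else if k = i then s else (1::real)) k (y' k))"
  proof (intro sum.cong refl)
    fix y' assume "y' \<in> Ylab l"
    have "(\<Prod>k\<in>{1..l}. (\<lambda>k s. if k = j then (if s = b then 1 else 0) else if k = i then s else (1::real)) k (y' k))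
       = (if y' j = b then 1 else 0) * (\<Prod>k\<in>{1..l} - {j}. (\<lambda>k s. if k = j then (if s = b then 1 else 0) else if k = i then s else (1::real)) k (y' k))"
      using j by (subst prod.remove[of _ j]) auto
    also have "(\<Prod>k\<in>{1..l} - {j}. (\<lambda>k s. if k = j then (if s = b then 1 else 0) else if k = i then s else (1::real)) k (y' k))
       = (\<Prod>k\<in>{1..l} - {j}. if k = i then y' i else 1)"
      by (intro prod.cong) auto
    also have "\<dots> = y' i" using i False by (subst prod.delta) auto
    finally show "(if y' j = b then 1 else 0) * y' i = (\<Prod>k\<in>{1..l}. (\<lambda>k s. if k = j then (if s = b then 1 else 0) else if k = i then s else (1::real)) k (y' k))"
      by simp
  qed
  also have "\<dots> = 0"
    unfolding sumY_prod[where f = "\<lambda>k s. if k = j then (if s = b then 1 else 0) else if k = i then s else (1::real)"]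
    using i False by (intro prod_zero) auto
  finally show ?thesis using False by simp
qed

lemma lnsum:
  assumes "y' \<in> Ylab l"
  shows "ln (\<Sum>y''\<in>Ylab l. exp (\<Sum>i=1..l. (y'' i - y' i) * H i)) = (\<Sum>i=1..l. psi (H i) - y' i * H i)"
proof -
  have "(\<Sum>y''\<in>Ylab l. exp (\<Sum>i=1..l. (y'' i - y' i) * H i))
      = (\<Sum>y''\<in>Ylab l. \<Prod>k\<in>{1..l}. (\<lambda>k s. exp ((s - y' k) * H k)) k (y'' k))"
    by (simp add: exp_sum)
  also have "\<dots> = (\<Prod>k\<in>{1..l}. exp ((1 - y' k) * H k) + exp ((-1 - y' k) * H k))"
    by (rule sumY_prod)
  also have "\<dots> = (\<Prod>k\<in>{1..l}. exp (- y' k * H k) * (exp (H k) + exp (- H k)))"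
    by (intro prod.cong refl) (simp add: algebra_simps flip: exp_add)
  finally have eq: "(\<Sum>y''\<in>Ylab l. exp (\<Sum>i=1..l. (y'' i - y' i) * H i)) = \<dots>" .
  have pos2: "\<And>k. exp (H k) + exp (- H k) > 0" by (simp add: add_pos_pos)
  have pos: "\<And>k. exp (- y' k * H k) * (exp (H k) + exp (- H k)) > 0" using pos2 by simp
  have lnk: "ln (exp (- y' k * H k) * (exp (H k) + exp (- H k))) = psi (H k) - y' k * H k" for k
    using pos2[of k] by (subst ln_mult) (auto simp: psi_def)
  show ?thesis
  proof -
    have pos3: "\<And>k. exp (H k) + exp (- H k) \<noteq> 0" using pos2 by (metis less_irrefl)
    show ?thesis using lnk unfolding eq
      by (subst ln_prod) (use pos pos3 in \<open>auto intro!: sum.cong\<close>)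
  qed
qed

lemma one_minus_ham:
  assumes "l \<ge> 1"
  shows "1 - ham_bar l y' y = (\<Sum>j=1..l. if y' j = y j then 1 else 0) / l"
proof -
  have "real (card {i\<in>{1..l}. y i \<noteq> y' i}) = (\<Sum>i\<in>{i\<in>{1..l}. y i \<noteq> y' i}. 1)"
    by (simp only: real_of_card)
  also have "\<dots> = (\<Sum>j=1..l. if y j \<noteq> y' j then 1 else 0)"
    by (rule sum.inter_filter) simp
  finally have "real (card {i\<in>{1..l}. y i \<noteq> y' i}) = (\<Sum>j=1..l. if y j \<noteq> y' j then 1 else 0)" .
  moreover have "(\<Sum>j=1..l. if y j \<noteq> y' j then 1 else 0) = real l - (\<Sum>j=1..l. if y' j = y j then 1 else (0::real))"
  proof -
    have "(\<Sum>j=1..l. if y j \<noteq> y' j then 1 else 0) = (\<Sum>j=1..l. 1 - (if y' j = y j then 1 else (0::real)))"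
      by (intro sum.cong) auto
    thus ?thesis by (simp add: sum_subtractf)
  qed
  ultimately show ?thesis using assms unfolding ham_bar_def by (simp add: field_simps)
qed

lemma L_log_form:
  assumes l: "l \<ge> 1" and y: "y \<in> Ylab l"
  shows "L_log l h x y = 2 ^ (l - 1) * (\<Sum>i=1..l. psi (h x i) - y i * h x i / l)"
proof -
  define H where "H = h x"
  define I where "I = (\<lambda>j y'. if y' j = y j then 1 else (0::real))"
  have "L_log l h x y = (\<Sum>y'\<in>Ylab l. (\<Sum>j=1..l. \<Sum>i=1..l. I j y' * psi (H i) - (I j y' * y' i) * H i) / l)"
    unfolding L_log_def
  proof (intro sum.cong refl)
    fix y' assume y': "y' \<in> Ylab l"
    have "(1 - ham_bar l y' y) * ln (\<Sum>y''\<in>Ylab l. exp (\<Sum>i = 1..l. (y'' i - y' i) * h x i))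
       = ((\<Sum>j=1..l. I j y') * (\<Sum>i=1..l. psi (H i) - y' i * H i)) / l"
      unfolding one_minus_ham[OF l] lnsum[OF y'] H_def I_def by simp
    also have "\<dots> = (\<Sum>j=1..l. \<Sum>i=1..l. I j y' * psi (H i) - (I j y' * y' i) * H i) / l"
      by (simp add: sum_product algebra_simps)
    finally show "(1 - ham_bar l y' y) * ln (\<Sum>y''\<in>Ylab l. exp (\<Sum>i = 1..l. (y'' i - y' i) * h x i)) = \<dots>" .
  qed
  also have "\<dots> = (\<Sum>j=1..l. \<Sum>i=1..l. \<Sum>y'\<in>Ylab l. I j y' * psi (H i) - (I j y' * y' i) * H i) / l"
  proof -
    have sw: "(\<Sum>y'\<in>Ylab l. \<Sum>j=1..l. \<Sum>i=1..l. X j i y') = (\<Sum>j=1..l. \<Sum>i=1..l. \<Sum>y'\<in>Ylab l. X j i y')" for X :: "nat \<Rightarrow> nat \<Rightarrow> (nat \<Rightarrow> real) \<Rightarrow> real"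
      by (subst sum.swap) (rule sum.cong[OF refl], rule sum.swap)
    show ?thesis by (simp only: sum_divide_distrib[symmetric] sw)
  qed
  also have "\<dots> = (\<Sum>j=1..l. \<Sum>i=1..l. psi (H i) * 2 ^ (l - 1) - (if i = j then 2 ^ (l - 1) * y j else 0) * H i) / l"
  proof -
    have "(\<Sum>y'\<in>Ylab l. I j y' * psi (H i) - (I j y' * y' i) * H i) = psi (H i) * 2 ^ (l - 1) - (if i = j then 2 ^ (l - 1) * y j else 0) * H i"
      if "j \<in> {1..l}" "i \<in> {1..l}" for i j
    proof -
      have yj: "y j = 1 \<or> y j = -1" using Ylab_mem[OF y that(1)] .
      show ?thesis
        unfolding sum_subtractf sum_distrib_right[symmetric] sum_distrib_left[symmetric]
        using count_N[OF that(1) yj] count_M[OF that(1) that(2) yj] by (simp add: I_def mult.commute)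
    qed
    thus ?thesis by (intro arg_cong[where f = "\<lambda>z. z / l"] sum.cong refl) auto
  qed
  also have "\<dots> = 2 ^ (l - 1) * (\<Sum>i=1..l. psi (h x i) - y i * h x i / l)"
  proof -
    have "(\<Sum>i=1..l. psi (H i) * 2 ^ (l - 1) - (if i = j then 2 ^ (l - 1) * y j else 0) * H i)
       = 2 ^ (l - 1) * (\<Sum>i=1..l. psi (H i)) - 2 ^ (l - 1) * y j * H j" if "j \<in> {1..l}" for j
    proof -
      have "(\<Sum>i=1..l. (if i = j then 2 ^ (l - 1) * y j else 0) * H i) = (\<Sum>i=1..l. if i = j then 2 ^ (l - 1) * y j * H j else 0)"
        by (intro sum.cong) auto
      also have "\<dots> = 2 ^ (l - 1) * y j * H j" using that by (subst sum.delta) auto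
      finally show ?thesis by (simp add: sum_subtractf sum_distrib_left mult.commute)
    qed
    hence "(\<Sum>j=1..l. \<Sum>i=1..l. psi (H i) * 2 ^ (l - 1) - (if i = j then 2 ^ (l - 1) * y j else 0) * H i)
       = (\<Sum>j=1..l. 2 ^ (l - 1) * (\<Sum>i=1..l. psi (H i)) - 2 ^ (l - 1) * y j * H j)"
      by (intro sum.cong) auto
    also have "\<dots> = l * 2 ^ (l - 1) * (\<Sum>i=1..l. psi (H i)) - 2 ^ (l - 1) * (\<Sum>j=1..l. y j * H j)"
      by (simp add: sum_subtractf sum_distrib_left mult.assoc)
    finally have A: "(\<Sum>j=1..l. \<Sum>i=1..l. psi (H i) * 2 ^ (l - 1) - (if i = j then 2 ^ (l - 1) * y j else 0) * H i) / l
       = (l * 2 ^ (l - 1) * (\<Sum>i=1..l. psi (H i)) - 2 ^ (l - 1) * (\<Sum>j=1..l. y j * H j)) / l" by simp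
    have B: "(l * 2 ^ (l - 1) * (\<Sum>i=1..l. psi (H i)) - 2 ^ (l - 1) * (\<Sum>j=1..l. y j * H j)) / l
       = 2 ^ (l - 1) * ((\<Sum>i=1..l. psi (H i)) - (\<Sum>j=1..l. y j * H j) / l)" using l by (simp add: field_simps)
    have C: "(\<Sum>i=1..l. psi (h x i) - y i * h x i / l) = (\<Sum>i=1..l. psi (H i)) - (\<Sum>j=1..l. y j * H j) / l"
      by (simp add: H_def sum_subtractf sum_divide_distrib)
    show ?thesis unfolding A B C ..
  qed
  finally show ?thesis .
qed



locale mls =
  fixes M :: "'x measure" and l :: nat and D :: "('x \<times> (nat \<Rightarrow> real)) measure"
  assumes l1: "l \<ge> 1" and PD: "prob_space D" and setsD: "sets D = sets (M \<Otimes>\<^sub>M count_space (Ylab l))"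
begin

lemma fst_meas: "fst \<in> measurable D M"
  using measurable_fst measurable_cong_sets[OF setsD refl] by blast

lemma snd_meas: "snd \<in> measurable D (count_space (Ylab l))"
  using measurable_snd measurable_cong_sets[OF setsD refl] by blast

lemma spaceD: "space D = space M \<times> Ylab l"
  using sets_eq_imp_space_eq[OF setsD] by (simp add: space_pair_measure)

lemma sndi_meas: "(\<lambda>z. snd z i) \<in> measurable D (count_space UNIV)"
proof -
  have "(\<lambda>y. y i) \<in> measurable (count_space (Ylab l)) (count_space UNIV)" by simp
  from measurable_comp[OF snd_meas this] show ?thesis by (simp add: comp_def)
qed

lemma S_sets: "{z \<in> space D. snd z i = 1} \<in> sets D"
proof -
  have "(\<lambda>z. snd z i) -` {1} \<inter> space D \<in> sets D" by (rule measurable_sets[OF sndi_meas]) simp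
  moreover have "(\<lambda>z. snd z i) -` {1} \<inter> space D = {z \<in> space D. snd z i = 1}" by blast
  ultimately show ?thesis by simp
qed

lemma T_sets: "{z \<in> space D. snd z i \<noteq> 1} \<in> sets D"
proof -
  have "(\<lambda>z. snd z i) -` (- {1}) \<inter> space D \<in> sets D" by (rule measurable_sets[OF sndi_meas]) simp
  moreover have "(\<lambda>z. snd z i) -` (- {1}) \<inter> space D = {z \<in> space D. snd z i \<noteq> 1}" by blast
  ultimately show ?thesis by simp
qed

definition mu where "mu = distr D M fst"
definition nuS where "nuS A = distr (density D (indicator A)) M fst"
definition QS where "QS A = RN_deriv mu (nuS A)"

lemma prob_mu: "prob_space mu"
  unfolding mu_def by (rule prob_space.prob_space_distr[OF PD fst_meas])

lemma sets_mu[simp]: "sets mu = sets M" by (simp add: mu_def)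
lemma space_mu[simp]: "space mu = space M" by (simp add: mu_def)
lemma measurable_mu: "measurable mu N = measurable M N" by (rule measurable_cong_sets) simp_all

lemma sf_mu: "sigma_finite_measure mu"
  by (rule prob_space_imp_sigma_finite[OF prob_mu])

lemma fst_meas_dens: "fst \<in> measurable (density D g) M"
proof -
  have "measurable (density D g) M = measurable D M" by (rule measurable_cong_sets) simp_all
  thus ?thesis using fst_meas by simp
qed

lemma ac_nuS:
  assumes A: "A \<in> sets D"
  shows "absolutely_continuous mu (nuS A)"
  unfolding absolutely_continuous_def
proof
  fix N assume N: "N \<in> null_sets mu"
  have NM: "N \<in> sets M" using N by (simp add: null_sets_def)
  have X: "fst -` N \<inter> space D \<in> null_sets D"
    using N null_sets_distr_iff[OF fst_meas, of N] unfolding mu_def by blast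
  have XS: "fst -` N \<inter> space D \<in> sets D" using X by (simp add: null_sets_def)
  have ae: "AE z in D. z \<notin> fst -` N \<inter> space D" using X by (rule AE_not_in)
  have ae2: "AE z in D. z \<in> fst -` N \<inter> space D \<longrightarrow> indicator A z = (0::ennreal)"
    using ae by (rule AE_mp) (rule AE_I2, blast)
  have mi: "indicator A \<in> borel_measurable D" using A by simp
  have "fst -` N \<inter> space D \<in> null_sets (density D (indicator A))"
    using null_sets_density_iff[OF mi, of "fst -` N \<inter> space D"] XS ae2 by blast
  hence "fst -` N \<inter> space (density D (indicator A)) \<in> null_sets (density D (indicator A))"
    by simp
  thus "N \<in> null_sets (nuS A)"
    unfolding nuS_def using NM null_sets_distr_iff[OF fst_meas_dens, of N] by blast
qed

lemma rep:
  assumes A: "A \<in> sets D" and f[measurable]: "f \<in> borel_measurable M"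
  shows "(\<integral>\<^sup>+ z. f (fst z) * indicator A z \<partial>D) = (\<integral>\<^sup>+ x. QS A x * f x \<partial>mu)"
proof -
  have "(\<integral>\<^sup>+ x. QS A x * f x \<partial>mu) = integral\<^sup>N (nuS A) f"
    unfolding QS_def
    by (rule sigma_finite_measure.RN_deriv_nn_integral[OF sf_mu ac_nuS[OF A], symmetric])
       (auto simp: nuS_def mu_def)
  also have "\<dots> = (\<integral>\<^sup>+ z. f (fst z) \<partial>density D (indicator A))"
    unfolding nuS_def by (rule nn_integral_distr[OF fst_meas_dens]) simp
  also have "\<dots> = (\<integral>\<^sup>+ z. indicator A z * f (fst z) \<partial>D)"
    using A measurable_compose[OF fst_meas f] by (subst nn_integral_density) auto
  finally show ?thesis by (simp add: mult.commute)
qed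

abbreviation Si :: "nat \<Rightarrow> ('x \<times> (nat \<Rightarrow> real)) set" where "Si i \<equiv> {z \<in> space D. snd z i = 1}"
abbreviation Ti :: "nat \<Rightarrow> ('x \<times> (nat \<Rightarrow> real)) set" where "Ti i \<equiv> {z \<in> space D. snd z i \<noteq> 1}"

lemma QS_add: "AE x in mu. QS (Si i) x + QS (Ti i) x = 1"
proof -
  have m1: "(\<lambda>x. QS (Si i) x + QS (Ti i) x) \<in> borel_measurable mu" unfolding QS_def by simp
  have "density mu (\<lambda>x. QS (Si i) x + QS (Ti i) x) = density mu (\<lambda>_. 1)"
  proof (rule measure_eqI)
    show "sets (density mu (\<lambda>x. QS (Si i) x + QS (Ti i) x)) = sets (density mu (\<lambda>_. 1))" by simp
  next
    fix X assume "X \<in> sets (density mu (\<lambda>x. QS (Si i) x + QS (Ti i) x))"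
    hence X: "X \<in> sets M" by simp
    have iX: "indicator X \<in> borel_measurable M" using X by simp
    have iXf: "(\<lambda>z. indicator X (fst z) :: ennreal) \<in> borel_measurable D"
      using measurable_compose[OF fst_meas iX] .
    have "emeasure (density mu (\<lambda>x. QS (Si i) x + QS (Ti i) x)) X
        = (\<integral>\<^sup>+ x. (QS (Si i) x + QS (Ti i) x) * indicator X x \<partial>mu)"
      using X m1 by (subst emeasure_density) auto
    also have "\<dots> = (\<integral>\<^sup>+ x. QS (Si i) x * indicator X x \<partial>mu) + (\<integral>\<^sup>+ x. QS (Ti i) x * indicator X x \<partial>mu)"
    proof -
      have iXm: "indicator X \<in> borel_measurable mu" by (rule borel_measurable_indicator) (use X in simp)
      have "(\<lambda>x. QS A x * indicator X x) \<in> borel_measurable mu" for A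
        unfolding QS_def using iXm by measurable
      thus ?thesis by (subst nn_integral_add[symmetric]) (auto simp: distrib_right)
    qed
    also have "\<dots> = (\<integral>\<^sup>+ z. indicator X (fst z) * indicator (Si i) z \<partial>D) + (\<integral>\<^sup>+ z. indicator X (fst z) * indicator (Ti i) z \<partial>D)"
      using rep[OF S_sets iX] rep[OF T_sets iX] by simp
    also have "\<dots> = (\<integral>\<^sup>+ z. indicator X (fst z) * indicator (Si i) z + indicator X (fst z) * indicator (Ti i) z \<partial>D)"
      using S_sets T_sets iXf by (subst nn_integral_add) auto
    also have "\<dots> = (\<integral>\<^sup>+ z. indicator X (fst z) \<partial>D)"
      by (intro nn_integral_cong) (auto simp: indicator_def)
    also have "\<dots> = (\<integral>\<^sup>+ x. indicator X x \<partial>mu)"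
      unfolding mu_def using iX by (subst nn_integral_distr[OF fst_meas]) auto
    also have "\<dots> = emeasure (density mu (\<lambda>_. 1)) X"
      using X by (simp add: density_1)
    finally show "emeasure (density mu (\<lambda>x. QS (Si i) x + QS (Ti i) x)) X = emeasure (density mu (\<lambda>_. 1)) X" .
  qed
  thus ?thesis
    using sigma_finite_measure.density_unique_iff[OF sf_mu m1, of "\<lambda>_. 1"] by simp
qed

definition q where "q i x = min 1 (enn2real (QS (Si i) x))"

lemma q_ge0: "0 \<le> q i x" and q_le1: "q i x \<le> 1"
  by (auto simp: q_def)

lemma q_meas: "(\<lambda>x. q i x) \<in> borel_measurable M"
proof -
  have "(\<lambda>x. q i x) \<in> borel_measurable mu" unfolding q_def QS_def by measurable
  thus ?thesis by (simp add: measurable_cong_sets[OF sets_mu refl, symmetric])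
qed

lemma ennreal_split:
  fixes a b :: ennreal
  assumes "a + b = 1"
  shows "a = ennreal (min 1 (enn2real a)) \<and> b = ennreal (1 - min 1 (enn2real a))"
proof -
  have "a \<noteq> \<top>" "b \<noteq> \<top>" using assms by (auto simp: top_add add_top)
  then obtain ra rb where a: "a = ennreal ra" "ra \<ge> 0" and b: "b = ennreal rb" "rb \<ge> 0"
    by (metis enn2real_nonneg ennreal_enn2real less_top)
  have "ennreal (ra + rb) = 1" using assms a b by (simp add: ennreal_plus)
  hence "ra + rb = 1" by simp
  thus ?thesis using a b by (auto simp: min_def)
qed

lemma AE_q: "AE x in mu. QS (Si i) x = ennreal (q i x) \<and> QS (Ti i) x = ennreal (1 - q i x)"
  using QS_add[of i] by (rule AE_mp) (rule AE_I2, use ennreal_split in \<open>auto simp: q_def\<close>)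

lemma meas_if:
  assumes "A \<in> borel_measurable M" "B \<in> borel_measurable M"
  shows "(\<lambda>z. if snd z i = 1 then A (fst z) else B (fst z) :: real) \<in> borel_measurable D"
  by (rule measurable_If) (use measurable_compose[OF fst_meas assms(1)] measurable_compose[OF fst_meas assms(2)] S_sets in auto)

lemma rep2:
  assumes A: "A \<in> borel_measurable M" and B: "B \<in> borel_measurable M"
    and A0: "\<And>x. A x \<ge> 0" and B0: "\<And>x. B x \<ge> 0"
  shows "(\<integral>\<^sup>+ z. ennreal (if snd z i = 1 then A (fst z) else B (fst z)) \<partial>D)
       = (\<integral>\<^sup>+ x. ennreal (q i x * A x + (1 - q i x) * B x) \<partial>mu)"
proof -
  have eA: "(\<lambda>x. ennreal (A x)) \<in> borel_measurable M" using A by measurable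
  have eB: "(\<lambda>x. ennreal (B x)) \<in> borel_measurable M" using B by measurable
  have eAD: "(\<lambda>z. ennreal (A (fst z))) \<in> borel_measurable D" using measurable_compose[OF fst_meas eA] by simp
  have eBD: "(\<lambda>z. ennreal (B (fst z))) \<in> borel_measurable D" using measurable_compose[OF fst_meas eB] by simp
  have "(\<integral>\<^sup>+ z. ennreal (if snd z i = 1 then A (fst z) else B (fst z)) \<partial>D)
      = (\<integral>\<^sup>+ z. ennreal (A (fst z)) * indicator (Si i) z + ennreal (B (fst z)) * indicator (Ti i) z \<partial>D)"
    by (intro nn_integral_cong) (auto simp: indicator_def)
  also have "\<dots> = (\<integral>\<^sup>+ z. ennreal (A (fst z)) * indicator (Si i) z \<partial>D) + (\<integral>\<^sup>+ z. ennreal (B (fst z)) * indicator (Ti i) z \<partial>D)"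
    using eAD eBD S_sets T_sets by (subst nn_integral_add) auto
  also have "\<dots> = (\<integral>\<^sup>+ x. QS (Si i) x * ennreal (A x) \<partial>mu) + (\<integral>\<^sup>+ x. QS (Ti i) x * ennreal (B x) \<partial>mu)"
    using rep[OF S_sets eA] rep[OF T_sets eB] by simp
  also have "\<dots> = (\<integral>\<^sup>+ x. QS (Si i) x * ennreal (A x) + QS (Ti i) x * ennreal (B x) \<partial>mu)"
  proof -
    have eAm: "(\<lambda>x. ennreal (A x)) \<in> borel_measurable mu" using eA by (simp add: measurable_mu)
    have eBm: "(\<lambda>x. ennreal (B x)) \<in> borel_measurable mu" using eB by (simp add: measurable_mu)
    have "(\<lambda>x. QS (Si i) x * ennreal (A x)) \<in> borel_measurable mu" unfolding QS_def using eAm by measurable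
    moreover have "(\<lambda>x. QS (Ti i) x * ennreal (B x)) \<in> borel_measurable mu" unfolding QS_def using eBm by measurable
    ultimately show ?thesis by (subst nn_integral_add) auto
  qed
  also have "\<dots> = (\<integral>\<^sup>+ x. ennreal (q i x * A x + (1 - q i x) * B x) \<partial>mu)"
  proof (rule nn_integral_cong_AE)
    show "AE x in mu. QS (Si i) x * ennreal (A x) + QS (Ti i) x * ennreal (B x) = ennreal (q i x * A x + (1 - q i x) * B x)"
      using AE_q[of i] by (rule AE_mp) (rule AE_I2, auto simp: ennreal_mult ennreal_plus q_ge0 q_le1 A0 B0)
  qed
  finally show ?thesis .
qed

lemma rep_sum:
  assumes A: "\<And>i. i \<in> {1..l} \<Longrightarrow> A i \<in> borel_measurable M" and B: "\<And>i. i \<in> {1..l} \<Longrightarrow> B i \<in> borel_measurable M"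
    and A0: "\<And>i x. A i x \<ge> 0" and B0: "\<And>i x. B i x \<ge> 0"
  shows "(\<integral>\<^sup>+ z. ennreal (\<Sum>i=1..l. if snd z i = 1 then A i (fst z) else B i (fst z)) \<partial>D)
       = (\<integral>\<^sup>+ x. ennreal (\<Sum>i=1..l. q i x * A i x + (1 - q i x) * B i x) \<partial>mu)"
proof -
  have "(\<integral>\<^sup>+ z. ennreal (\<Sum>i=1..l. if snd z i = 1 then A i (fst z) else B i (fst z)) \<partial>D)
      = (\<integral>\<^sup>+ z. (\<Sum>i=1..l. ennreal (if snd z i = 1 then A i (fst z) else B i (fst z))) \<partial>D)"
    by (intro nn_integral_cong, subst sum_ennreal) (auto simp: A0 B0)
  also have "\<dots> = (\<Sum>i=1..l. \<integral>\<^sup>+ z. ennreal (if snd z i = 1 then A i (fst z) else B i (fst z)) \<partial>D)"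
  proof (rule nn_integral_sum)
    fix i assume "i \<in> {1..l}"
    from meas_if[OF A[OF this] B[OF this], of i]
    show "(\<lambda>z. ennreal (if snd z i = 1 then A i (fst z) else B i (fst z))) \<in> borel_measurable D"
      by measurable
  qed
  also have "\<dots> = (\<Sum>i=1..l. \<integral>\<^sup>+ x. ennreal (q i x * A i x + (1 - q i x) * B i x) \<partial>mu)"
    by (intro sum.cong refl rep2 A B A0 B0) auto
  also have "\<dots> = (\<integral>\<^sup>+ x. (\<Sum>i=1..l. ennreal (q i x * A i x + (1 - q i x) * B i x)) \<partial>mu)"
  proof (rule nn_integral_sum[symmetric])
    fix i assume i: "i \<in> {1..l}"
    have "(\<lambda>x. ennreal (q i x * A i x + (1 - q i x) * B i x)) \<in> borel_measurable M"
      using q_meas[of i] A[OF i] B[OF i] by measurable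
    thus "(\<lambda>x. ennreal (q i x * A i x + (1 - q i x) * B i x)) \<in> borel_measurable mu"
      by (simp add: measurable_mu)
  qed
  also have "\<dots> = (\<integral>\<^sup>+ x. ennreal (\<Sum>i=1..l. q i x * A i x + (1 - q i x) * B i x) \<partial>mu)"
    by (intro nn_integral_cong, subst sum_ennreal) (auto simp: A0 B0 q_ge0 q_le1)
  finally show ?thesis .
qed

lemma snd_Y: "z \<in> space D \<Longrightarrow> snd z \<in> Ylab l"
  using spaceD by (cases z) auto

lemma psi_cont: "continuous_on UNIV psi"
proof -
  have "\<And>t::real. exp t + exp (- t) > 0" by (simp add: add_pos_pos)
  hence "\<And>t::real. exp t + exp (- t) \<noteq> 0" by (metis less_irrefl)
  thus ?thesis unfolding psi_def by (intro continuous_intros) auto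
qed

lemma psi_meas: "f \<in> borel_measurable N \<Longrightarrow> (\<lambda>x. psi (f x)) \<in> borel_measurable N"
  by (rule measurable_compose[OF _ borel_measurable_continuous_onI[OF psi_cont]])

lemma risk_log:
  assumes g: "g \<in> Hall M l"
  shows "risk D (L_log l) g = (\<integral>\<^sup>+ x. ennreal (2 ^ (l - 1) * (\<Sum>i=1..l. fl ((2 * q i x - 1) / l) (g x i))) \<partial>mu)"
proof -
  define A where "A i x = 2 ^ (l - 1) * (psi (g x i) - g x i / l)" for i x
  define B where "B i x = 2 ^ (l - 1) * (psi (g x i) + g x i / l)" for i x
  have lpos: "real l \<ge> 1" using l1 by simp
  have absl: "\<bar>t\<bar> / l \<le> \<bar>t\<bar>" for t :: real
  proof -
    have "\<bar>t\<bar> * 1 \<le> \<bar>t\<bar> * l" using lpos by (intro mult_left_mono) auto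
    thus ?thesis using lpos by (simp add: divide_le_eq)
  qed
  have A0: "A i x \<ge> 0" for i x
  proof -
    have "g x i / l \<le> \<bar>g x i\<bar> / l" using lpos by (intro divide_right_mono) auto
    thus ?thesis using psi_ge_abs[of "g x i"] absl[of "g x i"] by (simp add: A_def)
  qed
  have B0: "B i x \<ge> 0" for i x
  proof -
    have "- g x i / l \<le> \<bar>g x i\<bar> / l" using lpos by (intro divide_right_mono) auto
    thus ?thesis using psi_ge_abs[of "g x i"] absl[of "g x i"] by (simp add: B_def)
  qed
  have gm: "i \<in> {1..l} \<Longrightarrow> (\<lambda>x. g x i) \<in> borel_measurable M" for i using g by (auto simp: Hall_def)
  have Am: "i \<in> {1..l} \<Longrightarrow> A i \<in> borel_measurable M" for i
    unfolding A_def[abs_def] using psi_meas[OF gm] gm by measurable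
  have Bm: "i \<in> {1..l} \<Longrightarrow> B i \<in> borel_measurable M" for i
    unfolding B_def[abs_def] using psi_meas[OF gm] gm by measurable
  have "risk D (L_log l) g = (\<integral>\<^sup>+ z. ennreal (\<Sum>i=1..l. if snd z i = 1 then A i (fst z) else B i (fst z)) \<partial>D)"
    unfolding risk_def
  proof (intro nn_integral_cong arg_cong[where f = ennreal])
    fix z assume z: "z \<in> space D"
    have Y: "snd z \<in> Ylab l" using snd_Y[OF z] .
    show "L_log l g (fst z) (snd z) = (\<Sum>i=1..l. if snd z i = 1 then A i (fst z) else B i (fst z))"
      unfolding L_log_form[OF l1 Y] sum_distrib_left
    proof (intro sum.cong refl)
      fix i assume "i \<in> {1..l}"
      from Ylab_mem[OF Y this] show "2 ^ (l - 1) * (psi (g (fst z) i) - snd z i * g (fst z) i / real l) =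
          (if snd z i = 1 then A i (fst z) else B i (fst z))"
        by (auto simp: A_def B_def)
    qed
  qed
  also have "\<dots> = (\<integral>\<^sup>+ x. ennreal (\<Sum>i=1..l. q i x * A i x + (1 - q i x) * B i x) \<partial>mu)"
    by (rule rep_sum[OF Am Bm A0 B0])
  also have "\<dots> = (\<integral>\<^sup>+ x. ennreal (2 ^ (l - 1) * (\<Sum>i=1..l. fl ((2 * q i x - 1) / l) (g x i))) \<partial>mu)"
  proof (intro nn_integral_cong arg_cong[where f = ennreal])
    fix x
    have "q i x * A i x + (1 - q i x) * B i x = 2 ^ (l - 1) * fl ((2 * q i x - 1) / l) (g x i)" for i
    proof -
      have "real l \<noteq> 0" using lpos by simp
      thus ?thesis by (simp add: A_def B_def fl_def field_simps)
    qed
    thus "(\<Sum>i=1..l. q i x * A i x + (1 - q i x) * B i x) = 2 ^ (l - 1) * (\<Sum>i=1..l. fl ((2 * q i x - 1) / l) (g x i))"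
      by (simp add: sum_distrib_left)
  qed
  finally show ?thesis .
qed

lemma L_ham_form:
  assumes y: "y \<in> Ylab l"
  shows "L_ham l g x y = (\<Sum>i=1..l. if y i = 1 then (if g x i < 0 then 1 else 0) / l else (if g x i < 0 then 0 else 1) / l)"
proof -
  have "real (card {i\<in>{1..l}. y i \<noteq> pred_lab l g x i}) = (\<Sum>i\<in>{i\<in>{1..l}. y i \<noteq> pred_lab l g x i}. 1)"
    by (simp only: real_of_card)
  also have "\<dots> = (\<Sum>i=1..l. if y i \<noteq> pred_lab l g x i then 1 else 0)"
    by (rule sum.inter_filter) simp
  also have "\<dots> = (\<Sum>i=1..l. if y i = 1 then (if g x i < 0 then 1 else 0) else (if g x i < 0 then 0 else 1))"
  proof (intro sum.cong refl)
    fix i assume i: "i \<in> {1..l}"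
    from Ylab_mem[OF y i] i show "(if y i \<noteq> pred_lab l g x i then 1 else 0) = (if y i = 1 then (if g x i < 0 then 1 else 0) else (if g x i < 0 then 0 else (1::real)))"
      by (auto simp: pred_lab_def sgn1_def)
  qed
  finally show ?thesis unfolding L_ham_def ham_bar_def
    by (simp add: sum_divide_distrib if_distrib[of "\<lambda>z. z / real l"] cong: if_cong)
qed

lemma risk_ham:
  assumes g: "g \<in> Hall M l"
  shows "risk D (L_ham l) g = (\<integral>\<^sup>+ x. ennreal (\<Sum>i=1..l. (if g x i < 0 then q i x else 1 - q i x) / l) \<partial>mu)"
proof -
  define A where "A i x = (if g x i < 0 then 1 else 0) / real l" for i x
  define B where "B i x = (if g x i < 0 then 0 else 1) / real l" for i x
  have A0: "A i x \<ge> 0" for i x by (simp add: A_def)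
  have B0: "B i x \<ge> 0" for i x by (simp add: B_def)
  have gm: "i \<in> {1..l} \<Longrightarrow> (\<lambda>x. g x i) \<in> borel_measurable M" for i using g by (auto simp: Hall_def)
  have Am: "i \<in> {1..l} \<Longrightarrow> A i \<in> borel_measurable M" for i
    unfolding A_def[abs_def] using gm by measurable
  have Bm: "i \<in> {1..l} \<Longrightarrow> B i \<in> borel_measurable M" for i
    unfolding B_def[abs_def] using gm by measurable
  have "risk D (L_ham l) g = (\<integral>\<^sup>+ z. ennreal (\<Sum>i=1..l. if snd z i = 1 then A i (fst z) else B i (fst z)) \<partial>D)"
    unfolding risk_def
  proof (intro nn_integral_cong arg_cong[where f = ennreal])
    fix z assume z: "z \<in> space D"
    have Y: "snd z \<in> Ylab l" using snd_Y[OF z] .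
    show "L_ham l g (fst z) (snd z) = (\<Sum>i=1..l. if snd z i = 1 then A i (fst z) else B i (fst z))"
      unfolding L_ham_form[OF Y] A_def B_def by simp
  qed
  also have "\<dots> = (\<integral>\<^sup>+ x. ennreal (\<Sum>i=1..l. q i x * A i x + (1 - q i x) * B i x) \<partial>mu)"
    by (rule rep_sum[OF Am Bm A0 B0])
  also have "\<dots> = (\<integral>\<^sup>+ x. ennreal (\<Sum>i=1..l. (if g x i < 0 then q i x else 1 - q i x) / l) \<partial>mu)"
    by (intro nn_integral_cong arg_cong[where f = ennreal] sum.cong refl) (simp add: A_def B_def)
  finally show ?thesis .
qed

end



lemma l_le_pow: "1 \<le> l \<Longrightarrow> real l \<le> 2 ^ (l - 1)"
proof (induction l)
  case 0 thus ?case by simp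
next
  case (Suc n)
  show ?case
  proof (cases "n = 0")
    case True thus ?thesis by simp
  next
    case False
    hence "real n \<le> 2 ^ (n - 1)" using Suc by simp
    moreover have "(2::real) ^ (Suc n - 1) = 2 * 2 ^ (n - 1)" using False
      by (metis Suc_diff_1 diff_Suc_1 neq0_conv power_Suc)
    moreover have "(1::real) \<le> 2 ^ (n - 1)" by simp
    moreover have "real (Suc n) = real n + 1" by simp
    ultimately show ?thesis by linarith
  qed
qed

context mls
begin

definition cc where "cc i x = (2 * q i x - 1) / real l"
definition gt where "gt e x i = tau e (cc i x)"
definition rr where "rr g x = (\<Sum>i=1..l. ((if g x i < 0 then q i x else 1 - q i x) - min (q i x) (1 - q i x)) / real l)"
definition mh where "mh x = (\<Sum>i=1..l. min (q i x) (1 - q i x) / real l)"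
definition cRlog where "cRlog g x = 2 ^ (l - 1) * (\<Sum>i=1..l. fl (cc i x) (g x i))"
definition KK where "KK e g x = 2 ^ (l - 1) * (\<Sum>i=1..l. fl (cc i x) (g x i) - fl (cc i x) (gt e x i) + e)"

lemma cc_meas: "(\<lambda>x. cc i x) \<in> borel_measurable M"
  unfolding cc_def using q_meas[of i] by measurable

lemma gt_Hall: "gt e \<in> Hall M l"
proof (unfold Hall_def, safe)
  fix i
  show "(\<lambda>x. gt e x i) \<in> borel_measurable M" unfolding gt_def tau_def using cc_meas[of i] by measurable
qed

lemma fl_meas: "f \<in> borel_measurable M \<Longrightarrow> c \<in> borel_measurable M \<Longrightarrow> (\<lambda>x. fl (c x) (f x)) \<in> borel_measurable M"
  unfolding fl_def by (intro borel_measurable_diff borel_measurable_times psi_meas)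

lemma rr_point:
  assumes e: "e > 0"
  shows "0 \<le> rr g x" "(rr g x)^2 \<le> 4 * KK e g x" "0 \<le> KK e g x"
proof -
  define r where "r i = ((if g x i < 0 then q i x else 1 - q i x) - min (q i x) (1 - q i x)) / real l" for i
  define d where "d i = fl (cc i x) (g x i) - fl (cc i x) (gt e x i) + e" for i
  have kp: "0 \<le> r i" "(r i)^2 \<le> 4 * d i" "0 \<le> d i" for i
    using key_point[OF l1 q_ge0[of i x] q_le1[of i x] e, where g = "g x i"]
    unfolding r_def d_def gt_def cc_def by auto
  have rr: "rr g x = (\<Sum>i=1..l. r i)" by (simp add: rr_def r_def)
  have KK: "KK e g x = 2 ^ (l - 1) * (\<Sum>i=1..l. d i)" by (simp add: KK_def d_def)
  show "0 \<le> rr g x" unfolding rr by (intro sum_nonneg kp)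
  have sd: "0 \<le> (\<Sum>i=1..l. d i)" by (intro sum_nonneg kp)
  show "0 \<le> KK e g x" unfolding KK using sd by simp
  have "(rr g x)^2 \<le> (\<Sum>i=1..l. (r i)^2) * real l"
    unfolding rr using sum_squared_le_sum_of_squares[of r "{1..l}"] by simp
  also have "\<dots> \<le> (\<Sum>i=1..l. 4 * d i) * real l"
    by (intro mult_right_mono sum_mono kp) auto
  also have "\<dots> = 4 * ((\<Sum>i=1..l. d i) * real l)" by (simp add: sum_distrib_left)
  also have "\<dots> \<le> 4 * ((\<Sum>i=1..l. d i) * 2 ^ (l - 1))"
    using l_le_pow[OF l1] sd by (intro mult_left_mono) auto
  finally show "(rr g x)^2 \<le> 4 * KK e g x" unfolding KK by (simp add: mult.commute)
qed

lemma KK_eq: "KK e g x + cRlog (gt e) x = cRlog g x + 2 ^ (l - 1) * real l * e"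
  by (simp add: KK_def cRlog_def sum.distrib sum_subtractf algebra_simps)

lemma cc_abs: "\<bar>cc i x\<bar> \<le> 1"
proof -
  have lpos: "real l \<ge> 1" using l1 by simp
  have "\<bar>2 * q i x - 1\<bar> \<le> 1" using q_ge0[of i x] q_le1[of i x] by simp
  also have "\<dots> \<le> real l" using lpos .
  finally have a: "\<bar>2 * q i x - 1\<bar> \<le> real l" .
  have "\<bar>cc i x\<bar> = \<bar>2 * q i x - 1\<bar> / real l" by (simp add: cc_def abs_divide)
  also have "\<dots> \<le> 1" using a lpos by (simp add: divide_le_eq_1)
  finally show ?thesis .
qed

lemma fl_nonneg: "\<bar>c\<bar> \<le> 1 \<Longrightarrow> 0 \<le> fl c t"
proof -
  assume c: "\<bar>c\<bar> \<le> 1"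
  have "c * t \<le> \<bar>c * t\<bar>" by simp
  also have "\<dots> = \<bar>c\<bar> * \<bar>t\<bar>" by (simp add: abs_mult)
  also have "\<dots> \<le> 1 * \<bar>t\<bar>" using c by (intro mult_right_mono) auto
  finally show ?thesis using psi_ge_abs[of t] by (simp add: fl_def)
qed

lemma cRlog_nonneg: "0 \<le> cRlog g x"
  unfolding cRlog_def using fl_nonneg[OF cc_abs] by (intro mult_nonneg_nonneg sum_nonneg) auto

lemma Hall_meas: "g \<in> Hall M l \<Longrightarrow> i \<in> {1..l} \<Longrightarrow> (\<lambda>x. g x i) \<in> borel_measurable M"
  by (auto simp: Hall_def)

lemma cRlog_meas: "g \<in> Hall M l \<Longrightarrow> (\<lambda>x. cRlog g x) \<in> borel_measurable M"
  unfolding cRlog_def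
  by (intro borel_measurable_times borel_measurable_const borel_measurable_sum fl_meas cc_meas Hall_meas) auto

lemma KK_meas: "g \<in> Hall M l \<Longrightarrow> (\<lambda>x. KK e g x) \<in> borel_measurable M"
  unfolding KK_def
  by (intro borel_measurable_times borel_measurable_const borel_measurable_sum borel_measurable_add
      borel_measurable_diff fl_meas cc_meas Hall_meas gt_Hall) auto

lemma rr_meas: "g \<in> Hall M l \<Longrightarrow> (\<lambda>x. rr g x) \<in> borel_measurable M"
proof -
  assume g: "g \<in> Hall M l"
  have "(\<lambda>x. ((if g x i < 0 then q i x else 1 - q i x) - min (q i x) (1 - q i x)) / real l) \<in> borel_measurable M"
    if "i \<in> {1..l}" for i
    using Hall_meas[OF g that] q_meas[of i] by measurable
  thus ?thesis unfolding rr_def by (intro borel_measurable_sum) auto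
qed

lemma mh_meas: "(\<lambda>x. mh x) \<in> borel_measurable M"
proof -
  have "(\<lambda>x. min (q i x) (1 - q i x) / real l) \<in> borel_measurable M" for i
    using q_meas[of i] by measurable
  thus ?thesis unfolding mh_def by (intro borel_measurable_sum) auto
qed

lemma ennreal_meas_mu: "f \<in> borel_measurable M \<Longrightarrow> (\<lambda>x. ennreal (f x)) \<in> borel_measurable mu"
  by (simp add: measurable_mu)

lemma risk_log_cR: "g \<in> Hall M l \<Longrightarrow> risk D (L_log l) g = (\<integral>\<^sup>+ x. ennreal (cRlog g x) \<partial>mu)"
  unfolding cRlog_def cc_def by (rule risk_log)

lemma risk_ham_cR: "g \<in> Hall M l \<Longrightarrow> risk D (L_ham l) g = (\<integral>\<^sup>+ x. ennreal (mh x + rr g x) \<partial>mu)"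
proof -
  assume g: "g \<in> Hall M l"
  have "(\<Sum>i=1..l. (if g x i < 0 then q i x else 1 - q i x) / real l) = mh x + rr g x" for x
  proof -
    have "(\<Sum>i=1..l. (if g x i < 0 then q i x else 1 - q i x) / real l)
        = (\<Sum>i=1..l. min (q i x) (1 - q i x) / real l + ((if g x i < 0 then q i x else 1 - q i x) - min (q i x) (1 - q i x)) / real l)"
      by (intro sum.cong refl) (simp add: diff_divide_distrib)
    also have "\<dots> = mh x + rr g x" unfolding mh_def rr_def by (rule sum.distrib)
    finally show ?thesis .
  qed
  thus ?thesis using risk_ham[OF g] by simp
qed

lemma int_one: "(\<integral>\<^sup>+ x. 1 \<partial>mu) = 1"
  using prob_space.emeasure_space_1[OF prob_mu] by simp

lemma main_e:
  assumes h: "h \<in> Hall M l" and e: "e > 0"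
  shows "(\<integral>\<^sup>+ x. ennreal (rr h x) \<partial>mu)^2 + 4 * best_risk D (L_log l) (Hall M l)
      \<le> 4 * (risk D (L_log l) h + ennreal (2 ^ (l - 1) * real l * e))"
proof -
  define R where "R = (\<integral>\<^sup>+ x. ennreal (rr h x) \<partial>mu)"
  define IK where "IK = (\<integral>\<^sup>+ x. ennreal (KK e h x) \<partial>mu)"
  define IG where "IG = (\<integral>\<^sup>+ x. ennreal (cRlog (gt e) x) \<partial>mu)"
  define C where "C = 2 ^ (l - 1) * real l * e"
  have C0: "C \<ge> 0" using e by (simp add: C_def)
  have mr: "(\<lambda>x. ennreal (rr h x)) \<in> borel_measurable mu" by (rule ennreal_meas_mu[OF rr_meas[OF h]])
  have mK: "(\<lambda>x. ennreal (KK e h x)) \<in> borel_measurable mu" by (rule ennreal_meas_mu[OF KK_meas[OF h]])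
  have mG: "(\<lambda>x. ennreal (cRlog (gt e) x)) \<in> borel_measurable mu" by (rule ennreal_meas_mu[OF cRlog_meas[OF gt_Hall]])
  have mH: "(\<lambda>x. ennreal (cRlog h x)) \<in> borel_measurable mu" by (rule ennreal_meas_mu[OF cRlog_meas[OF h]])
  have "R^2 = (\<integral>\<^sup>+ x. ennreal (rr h x) * 1 \<partial>mu)^2" by (simp add: R_def)
  also have "\<dots> \<le> (\<integral>\<^sup>+ x. ennreal (rr h x) ^ 2 \<partial>mu) * (\<integral>\<^sup>+ x. 1 ^ 2 \<partial>mu)"
    by (rule Cauchy_Schwarz_nn_integral[OF mr]) simp
  also have "\<dots> = (\<integral>\<^sup>+ x. ennreal (rr h x) ^ 2 \<partial>mu)" using int_one by simp
  also have "\<dots> \<le> (\<integral>\<^sup>+ x. ennreal 4 * ennreal (KK e h x) \<partial>mu)"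
  proof (intro nn_integral_mono)
    fix x
    have "ennreal (rr h x) ^ 2 = ennreal ((rr h x)^2)" using rr_point(1)[OF e] by (simp add: ennreal_power)
    also have "\<dots> \<le> ennreal (4 * KK e h x)" using rr_point(2)[OF e, of h x] by (intro ennreal_leI)
    also have "\<dots> = ennreal 4 * ennreal (KK e h x)" by (rule ennreal_mult') simp
    finally show "ennreal (rr h x) ^ 2 \<le> ennreal 4 * ennreal (KK e h x)" .
  qed
  also have "\<dots> = 4 * IK" unfolding IK_def by (subst nn_integral_cmult[OF mK]) simp
  finally have R2: "R^2 \<le> 4 * IK" .
  have "IK + IG = (\<integral>\<^sup>+ x. ennreal (KK e h x) + ennreal (cRlog (gt e) x) \<partial>mu)"
    unfolding IK_def IG_def by (rule nn_integral_add[OF mK mG, symmetric])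
  also have "\<dots> = (\<integral>\<^sup>+ x. ennreal (cRlog h x) + ennreal C \<partial>mu)"
  proof (intro nn_integral_cong)
    fix x
    have "ennreal (KK e h x) + ennreal (cRlog (gt e) x) = ennreal (KK e h x + cRlog (gt e) x)"
      using rr_point(3)[OF e, of h x] cRlog_nonneg by (simp add: ennreal_plus)
    also have "\<dots> = ennreal (cRlog h x + C)" by (simp add: KK_eq C_def)
    also have "\<dots> = ennreal (cRlog h x) + ennreal C" using C0 cRlog_nonneg by (simp add: ennreal_plus)
    finally show "ennreal (KK e h x) + ennreal (cRlog (gt e) x) = ennreal (cRlog h x) + ennreal C" .
  qed
  also have "\<dots> = (\<integral>\<^sup>+ x. ennreal (cRlog h x) \<partial>mu) + (\<integral>\<^sup>+ x. ennreal C \<partial>mu)"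
    by (rule nn_integral_add[OF mH]) simp
  also have "(\<integral>\<^sup>+ x. ennreal C \<partial>mu) = ennreal C"
    using prob_space.emeasure_space_1[OF prob_mu] by simp
  also have "(\<integral>\<^sup>+ x. ennreal (cRlog h x) \<partial>mu) = risk D (L_log l) h"
    by (rule risk_log_cR[OF h, symmetric])
  finally have sumeq: "IK + IG = risk D (L_log l) h + ennreal C" .
  have b: "best_risk D (L_log l) (Hall M l) \<le> IG"
    unfolding best_risk_def IG_def risk_log_cR[OF gt_Hall, symmetric] by (rule INF_lower[OF gt_Hall])
  have "R^2 + 4 * best_risk D (L_log l) (Hall M l) \<le> 4 * IK + 4 * IG"
    using R2 b by (intro add_mono mult_left_mono) auto
  also have "\<dots> = 4 * (risk D (L_log l) h + ennreal C)" by (metis distrib_left sumeq)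
  finally show ?thesis unfolding R_def C_def .
qed

lemma rr_le1: "rr g x \<le> 1"
proof -
  have lpos: "real l \<ge> 1" using l1 by simp
  have "rr g x \<le> (\<Sum>i=1..l. 1 / real l)" unfolding rr_def
  proof (intro sum_mono divide_right_mono)
    fix i show "(if g x i < 0 then q i x else 1 - q i x) - min (q i x) (1 - q i x) \<le> 1"
      using q_ge0[of i x] q_le1[of i x] by auto
  qed simp
  also have "\<dots> = 1" using lpos by simp
  finally show ?thesis .
qed

lemma mh_le1: "mh x \<le> 1"
proof -
  have lpos: "real l \<ge> 1" using l1 by simp
  have "mh x \<le> (\<Sum>i=1..l. 1 / real l)" unfolding mh_def
  proof (intro sum_mono divide_right_mono)
    fix i show "min (q i x) (1 - q i x) \<le> 1"
      using q_ge0[of i x] q_le1[of i x] by auto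
  qed simp
  also have "\<dots> = 1" using lpos by simp
  finally show ?thesis .
qed

lemma mh_ge0: "0 \<le> mh x"
  unfolding mh_def using q_ge0 q_le1 by (intro sum_nonneg divide_nonneg_nonneg) auto

lemma rr_ge0: "0 \<le> rr g x"
  unfolding rr_def using q_ge0 q_le1 by (intro sum_nonneg divide_nonneg_nonneg) auto

lemma int_le1: "(\<And>x. f x \<le> 1) \<Longrightarrow> (\<integral>\<^sup>+ x. ennreal (f x) \<partial>mu) \<le> 1"
proof -
  assume "\<And>x. f x \<le> 1"
  hence "(\<integral>\<^sup>+ x. ennreal (f x) \<partial>mu) \<le> (\<integral>\<^sup>+ x. 1 \<partial>mu)"
    by (intro nn_integral_mono) (simp add: ennreal_leI)
  thus ?thesis using int_one by simp
qed

lemma rr_fin: "(\<integral>\<^sup>+ x. ennreal (rr g x) \<partial>mu) \<noteq> \<top>"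
  using int_le1[of "rr g", OF rr_le1] by (metis ennreal_one_neq_top neq_top_trans)

lemma main_ham:
  assumes h: "h \<in> Hall M l"
  shows "risk D (L_ham l) h - best_risk D (L_ham l) (Hall M l) \<le> (\<integral>\<^sup>+ x. ennreal (rr h x) \<partial>mu)"
proof -
  define IM where "IM = (\<integral>\<^sup>+ x. ennreal (mh x) \<partial>mu)"
  have IMfin: "IM \<noteq> \<top>" unfolding IM_def using int_le1[of mh, OF mh_le1] by (metis ennreal_one_neq_top neq_top_trans)
  have mM: "(\<lambda>x. ennreal (mh x)) \<in> borel_measurable mu" by (rule ennreal_meas_mu[OF mh_meas])
  have split: "risk D (L_ham l) g = IM + (\<integral>\<^sup>+ x. ennreal (rr g x) \<partial>mu)" if g: "g \<in> Hall M l" for g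
  proof -
    have "risk D (L_ham l) g = (\<integral>\<^sup>+ x. ennreal (mh x) + ennreal (rr g x) \<partial>mu)"
      unfolding risk_ham_cR[OF g] by (intro nn_integral_cong ennreal_plus mh_ge0 rr_ge0)
    also have "\<dots> = IM + (\<integral>\<^sup>+ x. ennreal (rr g x) \<partial>mu)"
      unfolding IM_def by (rule nn_integral_add[OF mM ennreal_meas_mu[OF rr_meas[OF g]]])
    finally show ?thesis .
  qed
  have "IM \<le> best_risk D (L_ham l) (Hall M l)"
    unfolding best_risk_def
  proof (rule INF_greatest)
    fix g assume g: "g \<in> Hall M l"
    show "IM \<le> risk D (L_ham l) g" unfolding split[OF g] by simp
  qed
  hence "risk D (L_ham l) h - best_risk D (L_ham l) (Hall M l) \<le> risk D (L_ham l) h - IM"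
    by (intro ennreal_minus_mono) auto
  also have "\<dots> = (\<integral>\<^sup>+ x. ennreal (rr h x) \<partial>mu)"
    unfolding split[OF h] using IMfin by simp
  finally show ?thesis .
qed

lemma best_log_fin: "best_risk D (L_log l) (Hall M l) \<noteq> \<top>"
proof -
  have "best_risk D (L_log l) (Hall M l) \<le> risk D (L_log l) (\<lambda>x i. 0)"
    unfolding best_risk_def by (rule INF_lower) (simp add: Hall_def)
  also have "\<dots> = (\<integral>\<^sup>+ x. ennreal (cRlog (\<lambda>x i. 0) x) \<partial>mu)"
    by (rule risk_log_cR) (simp add: Hall_def)
  also have "\<dots> = (\<integral>\<^sup>+ x. ennreal (2 ^ (l - 1) * (real l * ln 2)) \<partial>mu)"
  proof -
    have f0: "fl c 0 = ln 2" for c by (simp add: fl_def psi_def)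
    show ?thesis unfolding cRlog_def f0 by simp
  qed
  also have "\<dots> = ennreal (2 ^ (l - 1) * (real l * ln 2))"
    using prob_space.emeasure_space_1[OF prob_mu] by simp
  finally show ?thesis by (rule neq_top_trans[OF ennreal_neq_top])
qed

end

lemma comb:
  fixes X b Lh Z :: ennreal and k :: real
  assumes X: "X \<noteq> \<top>" and b: "b \<noteq> \<top>" and k: "k \<ge> 0"
    and H: "\<And>e. e > 0 \<Longrightarrow> X^2 + 4 * b \<le> 4 * (Lh + ennreal (k * e))" and Z: "Z \<le> X"
  shows "Z \<le> 2 * ennsqrt (Lh - b)"
proof (cases "Lh = \<top>")
  case True
  thus ?thesis using b by (simp add: ennsqrt_def ennreal_mult_top)
next
  case False
  obtain x where x: "X = ennreal x" "x \<ge> 0" using X by (cases X) auto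
  obtain bb where bb: "b = ennreal bb" "bb \<ge> 0" using b by (cases b) auto
  obtain lh where lh: "Lh = ennreal lh" "lh \<ge> 0" using False by (cases Lh) auto
  have real: "x^2 + 4 * bb \<le> 4 * (lh + k * e)" if e: "e > 0" for e
  proof -
    have "ennreal (x^2 + 4 * bb) = X^2 + 4 * b" using x bb by (simp add: ennreal_power ennreal_plus ennreal_mult')
    also have "\<dots> \<le> 4 * (Lh + ennreal (k * e))" by (rule H[OF e])
    also have "\<dots> = ennreal (4 * (lh + k * e))" using lh k e by (simp add: ennreal_plus ennreal_mult')
    finally show ?thesis using lh k e by (subst (asm) ennreal_le_iff) auto
  qed
  have ineq: "x^2 + 4 * bb \<le> 4 * lh"
  proof (rule field_le_epsilon)
    fix eps :: real assume eps: "eps > 0"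
    define e where "e = eps / (4 * k + 1)"
    have e: "e > 0" using eps k by (simp add: e_def)
    have "4 * (k * e) \<le> eps" using eps k by (simp add: e_def field_simps)
    moreover have "4 * (lh + k * e) = 4 * lh + 4 * (k * e)" by (simp add: algebra_simps)
    ultimately show "x^2 + 4 * bb \<le> 4 * lh + eps" using real[OF e] by linarith
  qed
  have d0: "lh - bb \<ge> 0" using ineq by (smt (verit) zero_le_power2)
  have "Lh - b = ennreal (lh - bb)" using lh bb by (simp add: ennreal_minus)
  hence sq: "ennsqrt (Lh - b) = ennreal (sqrt (lh - bb))" using d0 by (simp add: ennsqrt_def)
  have "x = sqrt (x^2)" using x by simp
  also have "\<dots> \<le> sqrt (4 * (lh - bb))" using ineq by (intro real_sqrt_le_mono) (simp add: algebra_simps)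
  also have "\<dots> = sqrt 4 * sqrt (lh - bb)" by (rule real_sqrt_mult)
  also have "\<dots> = 2 * sqrt (lh - bb)" by simp
  finally have "x \<le> 2 * sqrt (lh - bb)" .
  hence "ennreal x \<le> ennreal (2 * sqrt (lh - bb))" by (rule ennreal_leI)
  also have "\<dots> = ennreal 2 * ennreal (sqrt (lh - bb))" by (rule ennreal_mult') simp
  finally have "X \<le> 2 * ennsqrt (Lh - b)" using x sq by simp
  with Z show ?thesis by (rule order_trans)
qed



lemma ineq:
  fixes M :: "'x measure" and l :: nat
    and D :: "('x \<times> (nat \<Rightarrow> real)) measure" and h :: "'x \<Rightarrow> nat \<Rightarrow> real"
  assumes l: "l \<ge> 1" and d: "distr_on M l D" and h: "h \<in> Hall M l"
  shows "risk D (L_ham l) h - best_risk D (L_ham l) (Hall M l)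
           \<le> 2 * ennsqrt (risk D (L_log l) h - best_risk D (L_log l) (Hall M l))"
proof -
  have "mls M l D" using l d unfolding mls_def distr_on_def by blast
  then interpret mls M l D .
  show ?thesis
  proof (rule comb[OF rr_fin[of h] best_log_fin, where k = "2 ^ (l - 1) * real l"])
    show "0 \<le> 2 ^ (l - 1) * real l" by simp
    show "risk D (L_ham l) h - best_risk D (L_ham l) (Hall M l) \<le> (\<integral>\<^sup>+ x. ennreal (rr h x) \<partial>mu)"
      by (rule main_ham[OF h])
    fix e :: real assume e: "e > 0"
    show "(\<integral>\<^sup>+ x. ennreal (rr h x) \<partial>mu)^2 + 4 * best_risk D (L_log l) (Hall M l)
      \<le> 4 * (risk D (L_log l) h + ennreal (2 ^ (l - 1) * real l * e))"
      by (rule main_e[OF h e])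
  qed
qed

lemma ennsqrt_tendsto:
  fixes b :: "nat \<Rightarrow> ennreal"
  assumes b: "b \<longlonglongrightarrow> 0"
  shows "(\<lambda>n. 2 * ennsqrt (b n)) \<longlonglongrightarrow> 0"
proof (rule order_tendstoI)
  fix a :: ennreal assume "a < 0" thus "eventually (\<lambda>n. a < 2 * ennsqrt (b n)) sequentially" by simp
next
  fix u :: ennreal assume u: "0 < u"
  define r where "r = (if u = \<top> then 1 else enn2real u)"
  have r: "r > 0" using u by (cases u) (auto simp: r_def)
  have ru: "ennreal r \<le> u" using u by (cases u) (auto simp: r_def)
  have "0 < ennreal ((r/3)^2)" using r by simp
  from order_tendstoD(2)[OF b this]
  show "eventually (\<lambda>n. 2 * ennsqrt (b n) < u) sequentially"
  proof eventually_elim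
    fix n assume bn: "b n < ennreal ((r/3)^2)"
    then obtain t where t: "b n = ennreal t" "t \<ge> 0" by (cases "b n") auto
    have "t < (r/3)^2" using bn t by (simp add: ennreal_less_iff)
    hence "sqrt t < sqrt ((r/3)^2)" by (intro real_sqrt_less_mono)
    hence st: "sqrt t < r / 3" using r by simp
    have "2 * ennsqrt (b n) = ennreal (2 * sqrt t)" using t by (simp add: ennsqrt_def ennreal_mult')
    also have "\<dots> < ennreal r" using st r t by (subst ennreal_less_iff) auto
    also have "\<dots> \<le> u" by (rule ru)
    finally show "2 * ennsqrt (b n) < u" .
  qed
qed

theorem corollary2:
  fixes M :: "'x measure" and l :: nat
    and D :: "('x \<times> (nat \<Rightarrow> real)) measure" and h :: "'x \<Rightarrow> nat \<Rightarrow> real"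
  assumes "l \<ge> 1"
    and "distr_on M l D"
    and "h \<in> Hall M l"
  shows "(risk D (L_ham l) h - best_risk D (L_ham l) (Hall M l)
           \<le> 2 * ennsqrt (risk D (L_log l) h - best_risk D (L_log l) (Hall M l)))
         \<and> bayes_consistent M l (L_log l) (L_ham l)"
proof
  show "risk D (L_ham l) h - best_risk D (L_ham l) (Hall M l)
           \<le> 2 * ennsqrt (risk D (L_log l) h - best_risk D (L_log l) (Hall M l))"
    by (rule ineq[OF assms])
  show "bayes_consistent M l (L_log l) (L_ham l)"
    unfolding bayes_consistent_def
  proof (intro allI impI)
    fix D' :: "('x \<times> (nat \<Rightarrow> real)) measure" and hs :: "nat \<Rightarrow> 'x \<Rightarrow> nat \<Rightarrow> real"
    assume d: "distr_on M l D'" and hs: "\<forall>n. hs n \<in> Hall M l"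
      and lim: "(\<lambda>n. risk D' (L_log l) (hs n) - best_risk D' (L_log l) (Hall M l)) \<longlonglongrightarrow> 0"
    show "(\<lambda>n. risk D' (L_ham l) (hs n) - best_risk D' (L_ham l) (Hall M l)) \<longlonglongrightarrow> 0"
    proof (rule tendsto_sandwich[OF _ _ tendsto_const ennsqrt_tendsto[OF lim]])
      show "\<forall>\<^sub>F n in sequentially. 0 \<le> risk D' (L_ham l) (hs n) - best_risk D' (L_ham l) (Hall M l)"
        by simp
      show "\<forall>\<^sub>F n in sequentially. risk D' (L_ham l) (hs n) - best_risk D' (L_ham l) (Hall M l)
          \<le> 2 * ennsqrt (risk D' (L_log l) (hs n) - best_risk D' (L_log l) (Hall M l))"
        using ineq[OF assms(1) d] hs by simp
    qed
  qed
qed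

end
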